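(* Let $(X,\Psi)$ be a $\sigma$-compact uniform space and $Y\subseteq X$. The following are equivalent: (1) $(X,\Psi)$ satisfies $\textsf{S}_1(\mathcal{O}_\Psi,\mathcal{O}_Y)$; (2) $(X,\Psi)$ satisfies $\textsf{S}_1(\mathcal{O},\mathcal{O}_Y)$; (3) ONE has no winning strategy in the game ${\sf G}_1(\mathcal{O},\mathcal{O}_Y)$; (4) ONE has no winning strategy in the game ${\sf G}_1(\mathcal{O}_\Psi,\mathcal{O}_Y)$.
   Context: A uniformity on $X$ is a filter $\Psi$ on $X\times X$ whose members contain the diagonal $\Delta_X$, closed under $U\mapsto U^{-1}$, such that for each $U\in\Psi$ there is $V\in\Psi$ with $V\circ V\subseteq U$, and with $\bigcap\Psi=\Delta_X$. $U(x)=\{y:(x,y)\in U\}$; $X$ has the topology with neighbourhood bases $\{U(x):U\in\Psi\}$. $\sigma$-compact: countable union of compact subsets. $\mathcal{O}$: open covers of $X$. For $N\in\Psi$, $\mathcal{O}(N)=\{\mathrm{Int}(N(x)):x\in X\}$, $\mathcal{O}_\Psi=\{\mathcal{O}(N):N\in\Psi\}$. $\mathcal{O}_Y$: families of open subsets of $X$ whose union contains $Y$. $\textsf{S}_1(\mathcal{A},\mathcal{B})$: for every sequence $(O_n)$ of elements of $\mathcal{A}$ there are $T_n\in O_n$ with $\{T_n:n\in\mathbb{N}\}\in\mathcal{B}$. Game ${\sf G}_1(\mathcal{A},\mathcal{B})$: in inning $n$ ONE chooses $O_n\in\mathcal{A}$, TWO responds with $T_n\in O_n$; TWO wins if $\{T_n:n\in\mathbb{N}\}\in\mathcal{B}$,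 else ONE wins. *)

theory Defs
  imports "HOL-Analysis.Analysis"
begin

definition is_uniformity :: "'a set \<Rightarrow> ('a \<times> 'a) set set \<Rightarrow> bool" where
  "is_uniformity X \<Psi> \<longleftrightarrow>
     \<Psi> \<noteq> {} \<and>
     (\<forall>U\<in>\<Psi>. U \<subseteq> X \<times> X) \<and>
     (\<forall>U V. U \<in> \<Psi> \<longrightarrow> U \<subseteq> V \<longrightarrow> V \<subseteq> X \<times> X \<longrightarrow> V \<in> \<Psi>) \<and>
     (\<forall>U\<in>\<Psi>. \<forall>V\<in>\<Psi>. U \<inter> V \<in> \<Psi>) \<and>
     (\<forall>U\<in>\<Psi>. Id_on X \<subseteq> U) \<and>
     (\<forall>U\<in>\<Psi>. converse U \<in> \<Psi>) \<and>
     (\<forall>U\<in>\<Psi>. \<exists>V\<in>\<Psi>. V O V \<subseteq> U) \<and>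
     \<Inter>\<Psi> = Id_on X"

definition uopen :: "'a set \<Rightarrow> ('a \<times> 'a) set set \<Rightarrow> 'a set \<Rightarrow> bool" where
  "uopen X \<Psi> S \<longleftrightarrow> S \<subseteq> X \<and> (\<forall>x\<in>S. \<exists>U\<in>\<Psi>. U `` {x} \<subseteq> S)"

definition utop :: "'a set \<Rightarrow> ('a \<times> 'a) set set \<Rightarrow> 'a topology" where
  "utop X \<Psi> = topology (uopen X \<Psi>)"

definition sigma_compact :: "'a topology \<Rightarrow> bool" where
  "sigma_compact T \<longleftrightarrow>
     (\<exists>K :: nat \<Rightarrow> 'a set. (\<forall>n. compactin T (K n)) \<and> (\<Union>n. K n) = topspace T)"

definition open_covers :: "'a topology \<Rightarrow> 'a set set set" where
  "open_covers T = {\<U>. (\<forall>U\<in>\<U>. openin T U) \<and> \<Union>\<U> = topspace T}"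

definition open_covers_of :: "'a topology \<Rightarrow> 'a set \<Rightarrow> 'a set set set" where
  "open_covers_of T Y = {\<U>. (\<forall>U\<in>\<U>. openin T U) \<and> Y \<subseteq> \<Union>\<U>}"

definition unif_cover :: "'a set \<Rightarrow> ('a \<times> 'a) set set \<Rightarrow> ('a \<times> 'a) set \<Rightarrow> 'a set set" where
  "unif_cover X \<Psi> N = {(utop X \<Psi>) interior_of (N `` {x}) | x. x \<in> X}"

definition unif_covers :: "'a set \<Rightarrow> ('a \<times> 'a) set set \<Rightarrow> 'a set set set" where
  "unif_covers X \<Psi> = {unif_cover X \<Psi> N | N. N \<in> \<Psi>}"

definition S1 :: "'b set set \<Rightarrow> 'b set set \<Rightarrow> bool" where
  "S1 \<A> \<B> \<longleftrightarrow>
     (\<forall>\<O> :: nat \<Rightarrow> 'b set. (\<forall>n. \<O> n \<in> \<A>) \<longrightarrow>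
        (\<exists>T :: nat \<Rightarrow> 'b. (\<forall>n. T n \<in> \<O> n) \<and> range T \<in> \<B>))"

text \<open>A strategy for ONE in G_1(A,B): maps the finite list of TWO's previous moves to
ONE's next move, an element of A.\<close>
definition one_strategy :: "'b set set \<Rightarrow> ('b list \<Rightarrow> 'b set) \<Rightarrow> bool" where
  "one_strategy \<A> \<sigma> \<longleftrightarrow> (\<forall>ts. \<sigma> ts \<in> \<A>)"

definition one_winning_strategy :: "'b set set \<Rightarrow> 'b set set \<Rightarrow> ('b list \<Rightarrow> 'b set) \<Rightarrow> bool" where
  "one_winning_strategy \<A> \<B> \<sigma> \<longleftrightarrow>
     one_strategy \<A> \<sigma> \<and>
     (\<forall>T :: nat \<Rightarrow> 'b. (\<forall>n. T n \<in> \<sigma> (map T [0..<n])) \<longrightarrow> range T \<notin> \<B>)"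

definition one_has_winning_strategy :: "'b set set \<Rightarrow> 'b set set \<Rightarrow> bool" where
  "one_has_winning_strategy \<A> \<B> \<longleftrightarrow> (\<exists>\<sigma>. one_winning_strategy \<A> \<B> \<sigma>)"

end

theory Submission
  imports Defs
begin


lemma unif_facts:
  assumes "is_uniformity X \<Psi>"
  shows "\<Psi> \<noteq> {}" "\<And>U. U\<in>\<Psi> \<Longrightarrow> U \<subseteq> X \<times> X"
    "\<And>U V. U \<in> \<Psi> \<Longrightarrow> U \<subseteq> V \<Longrightarrow> V \<subseteq> X \<times> X \<Longrightarrow> V \<in> \<Psi>"
    "\<And>U V. U\<in>\<Psi> \<Longrightarrow> V\<in>\<Psi> \<Longrightarrow> U \<inter> V \<in> \<Psi>"
    "\<And>U x. U\<in>\<Psi> \<Longrightarrow> x \<in> X \<Longrightarrow> (x,x) \<in> U"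
    "\<And>U. U\<in>\<Psi> \<Longrightarrow> converse U \<in> \<Psi>"
    "\<And>U. U\<in>\<Psi> \<Longrightarrow> \<exists>V\<in>\<Psi>. V O V \<subseteq> U"
proof -
  note d = assms[unfolded is_uniformity_def]
  note c1 = d[THEN conjunct1] and c2 = d[THEN conjunct2, THEN conjunct1]
    and c3 = d[THEN conjunct2, THEN conjunct2, THEN conjunct1]
    and c4 = d[THEN conjunct2, THEN conjunct2, THEN conjunct2, THEN conjunct1]
    and c5 = d[THEN conjunct2, THEN conjunct2, THEN conjunct2, THEN conjunct2, THEN conjunct1]
    and c6 = d[THEN conjunct2, THEN conjunct2, THEN conjunct2, THEN conjunct2, THEN conjunct2, THEN conjunct1]
    and c7 = d[THEN conjunct2, THEN conjunct2, THEN conjunct2, THEN conjunct2, THEN conjunct2, THEN conjunct2, THEN conjunct1]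
  show "\<Psi> \<noteq> {}" by (rule c1)
  show "\<And>U. U\<in>\<Psi> \<Longrightarrow> U \<subseteq> X \<times> X" using c2 by (rule bspec)
  show "\<And>U V. U \<in> \<Psi> \<Longrightarrow> U \<subseteq> V \<Longrightarrow> V \<subseteq> X \<times> X \<Longrightarrow> V \<in> \<Psi>" using c3 by simp
  show "\<And>U V. U\<in>\<Psi> \<Longrightarrow> V\<in>\<Psi> \<Longrightarrow> U \<inter> V \<in> \<Psi>" using c4 by simp
  show "\<And>U x. U\<in>\<Psi> \<Longrightarrow> x \<in> X \<Longrightarrow> (x,x) \<in> U"
  proof -
    fix U x assume "U \<in> \<Psi>" "x \<in> X"
    then have "Id_on X \<subseteq> U" using c5 by simp
    then show "(x,x) \<in> U" using \<open>x \<in> X\<close> by (meson Id_onI subsetD)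
  qed
  show "\<And>U. U\<in>\<Psi> \<Longrightarrow> converse U \<in> \<Psi>" using c6 by simp
  show "\<And>U. U\<in>\<Psi> \<Longrightarrow> \<exists>V\<in>\<Psi>. V O V \<subseteq> U" using c7 by simp
qed

lemma XX_in:
  assumes "is_uniformity X \<Psi>" shows "X \<times> X \<in> \<Psi>"
proof -
  obtain U where "U \<in> \<Psi>" using unif_facts(1)[OF assms] by blast
  then show ?thesis using unif_facts(2,3)[OF assms] by blast
qed

lemma finite_Inter_in:
  assumes u: "is_uniformity X \<Psi>" and "finite A"
  shows "A \<subseteq> \<Psi> \<Longrightarrow> (X \<times> X) \<inter> \<Inter>A \<in> \<Psi>"
  using assms(2)
proof (induction A rule: finite_induct)
  case empty
  then show ?case using XX_in[OF u] by simp
next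
  case (insert a A)
  have "(X \<times> X) \<inter> \<Inter>(insert a A) = a \<inter> ((X \<times> X) \<inter> \<Inter>A)" by auto
  then show ?case using insert unif_facts(4)[OF u] by auto
qed

lemma cube_root:
  assumes u: "is_uniformity X \<Psi>" and "U \<in> \<Psi>"
  shows "\<exists>W\<in>\<Psi>. converse W = W \<and> W O W O W \<subseteq> U"
proof -
  obtain V1 where V1: "V1 \<in> \<Psi>" "V1 O V1 \<subseteq> U" using unif_facts(7)[OF u assms(2)] by blast
  obtain V2 where V2: "V2 \<in> \<Psi>" "V2 O V2 \<subseteq> V1" using unif_facts(7)[OF u V1(1)] by blast
  define W where "W = V2 \<inter> converse V2"
  have W: "W \<in> \<Psi>" unfolding W_def using unif_facts(4,6)[OF u] V2 by blast
  have cW: "converse W = W" unfolding W_def by (simp add: converse_Int Int_commute)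
  have sub: "V2 \<subseteq> V2 O V2"
  proof
    fix p assume "p \<in> V2"
    then obtain a b where p: "p = (a,b)" "(a,b) \<in> V2" by (cases p) auto
    then have "b \<in> X" using unif_facts(2)[OF u V2(1)] by auto
    then have "(b,b) \<in> V2" using unif_facts(5)[OF u V2(1)] by auto
    then show "p \<in> V2 O V2" using p by auto
  qed
  have WV: "W \<subseteq> V2" unfolding W_def by (rule Int_lower1)
  have "W O W O W \<subseteq> V2 O V2 O V2" by (intro relcomp_mono WV)
  also have "\<dots> \<subseteq> (V2 O V2) O (V2 O V2)" using relcomp_mono[OF sub order_refl, of "V2 O V2"] by simp
  also have "\<dots> \<subseteq> V1 O V1" using V2 by auto
  also have "\<dots> \<subseteq> U" using V1 by simp
  finally show ?thesis using W cW by blast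
qed

lemma istop_uopen:
  assumes u: "is_uniformity X \<Psi>" shows "istopology (uopen X \<Psi>)"
  unfolding istopology_def
proof (intro conjI allI impI)
  fix S T assume S: "uopen X \<Psi> S" and T: "uopen X \<Psi> T"
  show "uopen X \<Psi> (S \<inter> T)" unfolding uopen_def
  proof (intro conjI ballI)
    show "S \<inter> T \<subseteq> X" using S unfolding uopen_def by auto
    fix x assume "x \<in> S \<inter> T"
    then obtain U V where UV: "U\<in>\<Psi>" "U``{x} \<subseteq> S" "V \<in> \<Psi>" "V``{x} \<subseteq> T"
      using S T unfolding uopen_def by blast
    have "U \<inter> V \<in> \<Psi>" using unif_facts(4)[OF u] UV(1,3) by blast
    moreover have "(U \<inter> V)``{x} \<subseteq> S \<inter> T" using UV(2,4) by blast
    ultimately show "\<exists>U\<in>\<Psi>. U `` {x} \<subseteq> S \<inter> T" by blast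
  qed
next
  fix K assume K: "\<forall>S\<in>K. uopen X \<Psi> S"
  show "uopen X \<Psi> (\<Union>K)" unfolding uopen_def
  proof (intro conjI ballI)
    show "\<Union>K \<subseteq> X" using K unfolding uopen_def by blast
    fix x assume "x \<in> \<Union>K"
    then obtain S where "S \<in> K" "x \<in> S" by blast
    then obtain U where "U \<in> \<Psi>" "U``{x} \<subseteq> S" using K unfolding uopen_def by blast
    then show "\<exists>U\<in>\<Psi>. U `` {x} \<subseteq> \<Union>K" using \<open>S \<in> K\<close> by blast
  qed
qed

lemma openin_utop:
  assumes u: "is_uniformity X \<Psi>" shows "openin (utop X \<Psi>) S \<longleftrightarrow> uopen X \<Psi> S"
proof -
  have "openin (topology (uopen X \<Psi>)) = uopen X \<Psi>" by (rule topology_inverse'[OF istop_uopen[OF u]])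
  then show ?thesis unfolding utop_def by simp
qed

lemma topspace_utop:
  assumes u: "is_uniformity X \<Psi>" shows "topspace (utop X \<Psi>) = X"
proof -
  have X: "openin (utop X \<Psi>) X" unfolding openin_utop[OF u] uopen_def
    by (intro conjI ballI subset_refl bexI[OF _ XX_in[OF u]]) auto
  have sub: "openin (utop X \<Psi>) S \<Longrightarrow> S \<subseteq> X" for S unfolding openin_utop[OF u] uopen_def by simp
  show ?thesis
  proof
    show "topspace (utop X \<Psi>) \<subseteq> X" unfolding topspace_def
    proof (rule Union_least)
      fix S assume "S \<in> {S. openin (utop X \<Psi>) S}"
      then show "S \<subseteq> X" using sub by simp
    qed
    show "X \<subseteq> topspace (utop X \<Psi>)" using X by (rule openin_subset)
  qed
qed

definition uint :: "'a set \<Rightarrow> ('a \<times> 'a) set set \<Rightarrow> 'a set \<Rightarrow> 'a set" where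
  "uint X \<Psi> A = {y\<in>X. \<exists>E\<in>\<Psi>. E``{y} \<subseteq> A}"

lemma uint_open:
  assumes u: "is_uniformity X \<Psi>" shows "openin (utop X \<Psi>) (uint X \<Psi> A)"
  unfolding openin_utop[OF u] uopen_def
proof (intro conjI ballI)
  show "uint X \<Psi> A \<subseteq> X" unfolding uint_def by auto
  fix y assume "y \<in> uint X \<Psi> A"
  then obtain E where E: "y \<in> X" "E \<in> \<Psi>" "E``{y} \<subseteq> A" unfolding uint_def by auto
  obtain E2 where E2: "E2 \<in> \<Psi>" "E2 O E2 \<subseteq> E" using unif_facts(7)[OF u E(2)] by blast
  have "E2``{y} \<subseteq> uint X \<Psi> A"
  proof
    fix z assume z: "z \<in> E2``{y}"
    then have "z \<in> X" using unif_facts(2)[OF u E2(1)] by auto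
    moreover have "E2``{z} \<subseteq> A" using z E2(2) E(3) by auto
    ultimately show "z \<in> uint X \<Psi> A" unfolding uint_def using E2(1) by auto
  qed
  then show "\<exists>U\<in>\<Psi>. U `` {y} \<subseteq> uint X \<Psi> A" using E2(1) by blast
qed

lemma uint_sub:
  assumes u: "is_uniformity X \<Psi>" shows "uint X \<Psi> A \<subseteq> A"
  unfolding uint_def using unif_facts(5)[OF u] by blast

lemma uint_mem:
  assumes u: "is_uniformity X \<Psi>" and "N \<in> \<Psi>" "x \<in> X" shows "x \<in> uint X \<Psi> (N``{x})"
  unfolding uint_def using assms by auto

lemma mem_interior_N:
  assumes u: "is_uniformity X \<Psi>" and "N \<in> \<Psi>" "x \<in> X"
  shows "x \<in> (utop X \<Psi>) interior_of (N``{x})"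
  using interior_of_maximal[OF uint_sub[OF u] uint_open[OF u]] uint_mem[OF assms] by blast

lemma unif_covers_sub:
  assumes u: "is_uniformity X \<Psi>" shows "unif_covers X \<Psi> \<subseteq> open_covers (utop X \<Psi>)"
proof
  fix C assume "C \<in> unif_covers X \<Psi>"
  then obtain N where N: "N \<in> \<Psi>" "C = unif_cover X \<Psi> N" unfolding unif_covers_def by auto
  have tX: "topspace (utop X \<Psi>) = X" by (rule topspace_utop[OF u])
  have "\<Union>C = X"
  proof
    show "\<Union>C \<subseteq> X"
    proof
      fix z assume "z \<in> \<Union>C"
      then obtain x where "z \<in> (utop X \<Psi>) interior_of (N``{x})" unfolding N unif_cover_def by auto
      then show "z \<in> X" using interior_of_subset_topspace[of "utop X \<Psi>"] tX by blast
    qed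
    show "X \<subseteq> \<Union>C"
    proof
      fix x assume "x \<in> X"
      then have "(utop X \<Psi>) interior_of (N``{x}) \<in> C" unfolding N unif_cover_def by blast
      then show "x \<in> \<Union>C" using mem_interior_N[OF u N(1) \<open>x \<in> X\<close>] by blast
    qed
  qed
  moreover have "\<forall>U\<in>C. openin (utop X \<Psi>) U" unfolding N unif_cover_def by auto
  ultimately show "C \<in> open_covers (utop X \<Psi>)" unfolding open_covers_def tX by auto
qed

lemma S1_mono: "A \<subseteq> A' \<Longrightarrow> S1 A' B \<Longrightarrow> S1 A B"
  unfolding S1_def by blast

lemma ws_mono: "A \<subseteq> A' \<Longrightarrow> one_has_winning_strategy A B \<Longrightarrow> one_has_winning_strategy A' B"
  unfolding one_has_winning_strategy_def one_winning_strategy_def one_strategy_def by blast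

lemma noS1_ws: "\<not> S1 A B \<Longrightarrow> one_has_winning_strategy A B"
proof -
  assume "\<not> S1 A B"
  then have "\<exists>Oc::nat \<Rightarrow> _. (\<forall>n. Oc n \<in> A) \<and> \<not> (\<exists>T::nat \<Rightarrow> _. (\<forall>n. T n \<in> Oc n) \<and> range T \<in> B)"
    unfolding S1_def by simp
  then obtain Oc :: "nat \<Rightarrow> _" where O: "\<forall>n. Oc n \<in> A" "\<not> (\<exists>T::nat \<Rightarrow> _. (\<forall>n. T n \<in> Oc n) \<and> range T \<in> B)"
    by blast
  have "one_strategy A (\<lambda>ts. Oc (length ts))" unfolding one_strategy_def using O(1) by blast
  moreover have "\<forall>T. (\<forall>n. T n \<in> Oc (length (map T [0..<n]))) \<longrightarrow> range T \<notin> B"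
    using O(2) by auto
  ultimately have "one_winning_strategy A B (\<lambda>ts. Oc (length ts))"
    unfolding one_winning_strategy_def by blast
  then show ?thesis unfolding one_has_winning_strategy_def by blast
qed



lemma lebesgue:
  assumes u: "is_uniformity X \<Psi>" and K: "compactin (utop X \<Psi>) K"
    and Fo: "\<forall>U\<in>F. openin (utop X \<Psi>) U" and KF: "K \<subseteq> \<Union>F"
  shows "\<exists>N\<in>\<Psi>. \<forall>z\<in>K. \<exists>U\<in>F. (converse N O N)``{z} \<subseteq> U"
proof -
  have KX: "K \<subseteq> X" using K unfolding compactin_def topspace_utop[OF u] by blast
  have "\<forall>x\<in>K. \<exists>W. W\<in>\<Psi> \<and> converse W = W \<and> (\<exists>U\<in>F. (W O W O W)``{x} \<subseteq> U)"
  proof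
    fix x assume "x \<in> K"
    then obtain U where U: "U \<in> F" "x \<in> U" using KF by blast
    then have "uopen X \<Psi> U" using Fo openin_utop[OF u] by blast
    then obtain V where V: "V \<in> \<Psi>" "V``{x} \<subseteq> U" using U(2) unfolding uopen_def by blast
    obtain W where W: "W \<in> \<Psi>" "converse W = W" "W O W O W \<subseteq> V" using cube_root[OF u V(1)] by blast
    have "(W O W O W)``{x} \<subseteq> U" using W(3) V(2) by blast
    then show "\<exists>W. W\<in>\<Psi> \<and> converse W = W \<and> (\<exists>U\<in>F. (W O W O W)``{x} \<subseteq> U)"
      using W(1,2) U(1) by blast
  qed
  from bchoice[OF this] obtain Wf where Wf: "\<forall>x\<in>K. Wf x \<in> \<Psi> \<and> converse (Wf x) = Wf x \<and> (\<exists>U\<in>F. (Wf x O Wf x O Wf x)``{x} \<subseteq> U)"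
    by (elim exE)
  have WfP: "\<And>x. x \<in> K \<Longrightarrow> Wf x \<in> \<Psi>" using Wf by simp
  have WfC: "\<And>x. x \<in> K \<Longrightarrow> converse (Wf x) = Wf x" using Wf by simp
  have WfU: "\<And>x. x \<in> K \<Longrightarrow> \<exists>U\<in>F. (Wf x O Wf x O Wf x)``{x} \<subseteq> U" using Wf by simp
  define G where "G x = uint X \<Psi> (Wf x``{x})" for x
  have Gopen: "\<forall>V\<in>G`K. openin (utop X \<Psi>) V" unfolding G_def using uint_open[OF u] by blast
  have "K \<subseteq> \<Union>(G`K)"
  proof
    fix x assume x: "x \<in> K"
    then have "Wf x \<in> \<Psi>" "x \<in> X" using Wf KX by auto
    then have "x \<in> G x" unfolding G_def by (rule uint_mem[OF u])
    then show "x \<in> \<Union>(G`K)" using x by blast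
  qed
  moreover have "\<forall>\<U>. (\<forall>U \<in> \<U>. openin (utop X \<Psi>) U) \<and> K \<subseteq> \<Union>\<U>
          \<longrightarrow> (\<exists>\<F>. finite \<F> \<and> \<F> \<subseteq> \<U> \<and> K \<subseteq> \<Union>\<F>)"
    using K unfolding compactin_def by (elim conjE)
  ultimately have "\<exists>\<F>. finite \<F> \<and> \<F> \<subseteq> G`K \<and> K \<subseteq> \<Union>\<F>" using Gopen by simp
  then obtain \<F> where \<F>: "finite \<F>" "\<F> \<subseteq> G`K" "K \<subseteq> \<Union>\<F>" by (elim exE conjE)
  then obtain J where J: "J \<subseteq> K" "finite J" "\<F> = G`J" by (meson finite_subset_image)
  define N where "N = (X \<times> X) \<inter> \<Inter>(Wf`J)"
  have "Wf`J \<subseteq> \<Psi>" using WfP J(1) by blast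
  then have N: "N \<in> \<Psi>" unfolding N_def using finite_Inter_in[OF u] J(2) by simp
  have "\<forall>z\<in>K. \<exists>U\<in>F. (converse N O N)``{z} \<subseteq> U"
  proof
    fix z assume "z \<in> K"
    then obtain x where x: "x \<in> J" "z \<in> G x" using \<F>(3) J(3) by blast
    then have xK: "x \<in> K" using J(1) by blast
    have xz: "(x,z) \<in> Wf x" using x(2) uint_sub[OF u] unfolding G_def by blast
    have NW: "N \<subseteq> Wf x" unfolding N_def using x(1) by blast
    have cW: "converse (Wf x) = Wf x" using WfC xK by simp
    obtain U where U: "U \<in> F" "(Wf x O Wf x O Wf x)``{x} \<subseteq> U" using WfU xK by blast
    have "(converse N O N)``{z} \<subseteq> (Wf x O Wf x O Wf x)``{x}"
    proof
      fix w assume "w \<in> (converse N O N)``{z}"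
      then obtain b where b: "(b,z) \<in> N" "(b,w) \<in> N" by blast
      then have "(b,z) \<in> Wf x" "(b,w) \<in> Wf x" using NW by blast+
      moreover have "(z,b) \<in> Wf x" using \<open>(b,z) \<in> Wf x\<close> cW by (metis converseI)
      ultimately have "(x,w) \<in> Wf x O Wf x O Wf x" using xz by blast
      then show "w \<in> (Wf x O Wf x O Wf x)``{x}" by blast
    qed
    then show "\<exists>U\<in>F. (converse N O N)``{z} \<subseteq> U" using U by blast
  qed
  then show ?thesis using N by blast
qed



primrec posn :: "('b list \<Rightarrow> 'b set) \<Rightarrow> nat \<Rightarrow> 'b list set" where
  "posn F 0 = {[]}"
| "posn F (Suc n) = (\<Union>p\<in>posn F n. (\<lambda>U. p @ [U]) ` F p)"

lemma finite_posn: "(\<And>p. finite (F p)) \<Longrightarrow> finite (posn F n)"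
  by (induction n) auto

lemma main_dir:
  assumes u: "is_uniformity X \<Psi>" and sc: "sigma_compact (utop X \<Psi>)"
    and Y: "Y \<subseteq> X" and S: "S1 (unif_covers X \<Psi>) (open_covers_of (utop X \<Psi>) Y)"
  shows "\<not> one_has_winning_strategy (open_covers (utop X \<Psi>)) (open_covers_of (utop X \<Psi>) Y)"
proof
  assume "one_has_winning_strategy (open_covers (utop X \<Psi>)) (open_covers_of (utop X \<Psi>) Y)"
  then obtain \<sigma> where \<sigma>: "one_winning_strategy (open_covers (utop X \<Psi>)) (open_covers_of (utop X \<Psi>) Y) \<sigma>"
    unfolding one_has_winning_strategy_def by (elim exE)
  have \<sigma>cov: "\<And>ts. \<sigma> ts \<in> open_covers (utop X \<Psi>)" using \<sigma> unfolding one_winning_strategy_def one_strategy_def by simp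
  have \<sigma>win: "\<And>T::nat \<Rightarrow> 'a set. (\<forall>n. T n \<in> \<sigma> (map T [0..<n])) \<Longrightarrow> range T \<notin> open_covers_of (utop X \<Psi>) Y"
    using \<sigma> unfolding one_winning_strategy_def by simp
  have tX: "topspace (utop X \<Psi>) = X" by (rule topspace_utop[OF u])
  have \<sigma>open: "\<And>ts U. U \<in> \<sigma> ts \<Longrightarrow> openin (utop X \<Psi>) U" using \<sigma>cov unfolding open_covers_def by simp
  have \<sigma>union: "\<And>ts. \<Union>(\<sigma> ts) = X" using \<sigma>cov unfolding open_covers_def tX by simp
  obtain K0 :: "nat \<Rightarrow> 'a set" where K0: "\<And>n. compactin (utop X \<Psi>) (K0 n)" "(\<Union>n. K0 n) = X"
    using sc unfolding sigma_compact_def tX by blast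
  define K where "K n = \<Union>(K0 ` {..n})" for n
  have Kc: "compactin (utop X \<Psi>) (K n)" for n unfolding K_def
  proof (rule compactin_Union)
    show "finite (K0 ` {..n})" by simp
    fix S assume "S \<in> K0 ` {..n}"
    then obtain i where "S = K0 i" by blast
    then show "compactin (utop X \<Psi>) S" using K0(1) by simp
  qed
  have Kmono: "m \<le> n \<Longrightarrow> K m \<subseteq> K n" for m n
  proof -
    assume "m \<le> n" then have "{..m} \<subseteq> {..n}" by simp
    then show ?thesis unfolding K_def by (intro Union_mono image_mono)
  qed
  have KX: "y \<in> X \<Longrightarrow> \<exists>m. y \<in> K m" for y
  proof -
    assume "y \<in> X"
    then have "y \<in> (\<Union>n. K0 n)" using K0(2) by simp
    then obtain m where "y \<in> K0 m" by blast
    then have "y \<in> K m" unfolding K_def by (intro UN_I[of m]) simp_all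
    then show "\<exists>m. y \<in> K m" by (rule exI)
  qed
  have "X \<times> X \<in> \<Psi>" by (rule XX_in[OF u])
  then have "unif_cover X \<Psi> (X \<times> X) \<in> unif_covers X \<Psi>" unfolding unif_covers_def by blast
  then have "\<exists>T0 :: nat \<Rightarrow> 'a set. (\<forall>n. T0 n \<in> unif_cover X \<Psi> (X \<times> X)) \<and> range T0 \<in> open_covers_of (utop X \<Psi>) Y"
    using S[unfolded S1_def, rule_format, of "\<lambda>n. unif_cover X \<Psi> (X \<times> X)"] by simp
  then obtain T0 :: "nat \<Rightarrow> 'a set" where "\<forall>n. T0 n \<in> unif_cover X \<Psi> (X \<times> X)"
    by (elim exE conjE)
  then have "T0 0 \<in> unif_cover X \<Psi> (X \<times> X)" by simp
  then have Xne: "X \<noteq> {}" unfolding unif_cover_def by blast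
  have "\<forall>p. \<exists>Fp. finite Fp \<and> Fp \<subseteq> \<sigma> p \<and> Fp \<noteq> {} \<and> K (length p) \<subseteq> \<Union>Fp"
  proof
    fix p :: "'a set list"
    have "\<forall>\<U>. (\<forall>U \<in> \<U>. openin (utop X \<Psi>) U) \<and> K (length p) \<subseteq> \<Union>\<U>
          \<longrightarrow> (\<exists>\<F>. finite \<F> \<and> \<F> \<subseteq> \<U> \<and> K (length p) \<subseteq> \<Union>\<F>)"
      using Kc[of "length p"] unfolding compactin_def by (elim conjE)
    moreover have "K (length p) \<subseteq> \<Union>(\<sigma> p)" using Kc[of "length p"] unfolding compactin_def tX \<sigma>union by simp
    moreover have "\<forall>U \<in> \<sigma> p. openin (utop X \<Psi>) U" using \<sigma>open by blast
    ultimately have "\<exists>\<F>. finite \<F> \<and> \<F> \<subseteq> \<sigma> p \<and> K (length p) \<subseteq> \<Union>\<F>" by simp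
    then obtain Fp where Fp: "finite Fp" "Fp \<subseteq> \<sigma> p" "K (length p) \<subseteq> \<Union>Fp"
      by (elim exE conjE)
    obtain u0 where "u0 \<in> \<sigma> p" using \<sigma>union[of p] Xne by blast
    then show "\<exists>Fp. finite Fp \<and> Fp \<subseteq> \<sigma> p \<and> Fp \<noteq> {} \<and> K (length p) \<subseteq> \<Union>Fp"
      using Fp by (intro exI[of _ "insert u0 Fp"]) auto
  qed
  from choice[OF this] obtain F where F0: "\<forall>p. finite (F p) \<and> F p \<subseteq> \<sigma> p \<and> F p \<noteq> {} \<and> K (length p) \<subseteq> \<Union>(F p)"
    by (elim exE)
  have F: "\<And>p. finite (F p)" "\<And>p. F p \<subseteq> \<sigma> p" "\<And>p. F p \<noteq> {}" "\<And>p. K (length p) \<subseteq> \<Union>(F p)"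
    using F0 by simp_all
  have "\<forall>p. \<exists>N. N\<in>\<Psi> \<and> (\<forall>z\<in>K (length p). \<exists>U\<in>F p. (converse N O N)``{z} \<subseteq> U)"
  proof
    fix p :: "'a set list"
    have "\<forall>U\<in>F p. openin (utop X \<Psi>) U" using F(2) \<sigma>open by blast
    then show "\<exists>N. N\<in>\<Psi> \<and> (\<forall>z\<in>K (length p). \<exists>U\<in>F p. (converse N O N)``{z} \<subseteq> U)"
      using lebesgue[OF u Kc[of "length p"] _ F(4)[of p]] by blast
  qed
  from choice[OF this] obtain Nf where Nf0: "\<forall>p. Nf p \<in> \<Psi> \<and> (\<forall>z\<in>K (length p). \<exists>U\<in>F p. (converse (Nf p) O Nf p)``{z} \<subseteq> U)"
    by (elim exE)
  have Nf: "\<And>p. Nf p \<in> \<Psi>" "\<And>p. \<forall>z\<in>K (length p). \<exists>U\<in>F p. (converse (Nf p) O Nf p)``{z} \<subseteq> U"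
    using Nf0 by simp_all
  define D where "D n = (X \<times> X) \<inter> \<Inter>(Nf ` posn F n)" for n
  have D: "D n \<in> \<Psi>" for n
  proof -
    have "finite (Nf ` posn F n)" using finite_posn[OF F(1)] by simp
    moreover have "Nf ` posn F n \<subseteq> \<Psi>" using Nf(1) by blast
    ultimately show ?thesis unfolding D_def using finite_Inter_in[OF u] by simp
  qed
  have DN: "p \<in> posn F n \<Longrightarrow> D n \<subseteq> Nf p" for p n unfolding D_def by blast
  have "\<forall>m. \<exists>Tm::nat \<Rightarrow> 'a set. (\<forall>k. Tm k \<in> unif_cover X \<Psi> (D (prod_encode (m,k)))) \<and> Y \<subseteq> \<Union>(range Tm)"
  proof
    fix m
    have "\<forall>k. unif_cover X \<Psi> (D (prod_encode (m,k))) \<in> unif_covers X \<Psi>" unfolding unif_covers_def using D by blast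
    then have "\<exists>Tm :: nat \<Rightarrow> 'a set. (\<forall>k. Tm k \<in> unif_cover X \<Psi> (D (prod_encode (m,k)))) \<and>
       range Tm \<in> open_covers_of (utop X \<Psi>) Y"
      using S[unfolded S1_def, rule_format, of "\<lambda>k. unif_cover X \<Psi> (D (prod_encode (m,k)))"] by simp
    then obtain Tm :: "nat \<Rightarrow> 'a set" where "\<forall>k. Tm k \<in> unif_cover X \<Psi> (D (prod_encode (m,k)))"
       "range Tm \<in> open_covers_of (utop X \<Psi>) Y"
      by (elim exE conjE)
    then show "\<exists>Tm::nat \<Rightarrow> 'a set. (\<forall>k. Tm k \<in> unif_cover X \<Psi> (D (prod_encode (m,k)))) \<and> Y \<subseteq> \<Union>(range Tm)"
      unfolding open_covers_of_def by blast
  qed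
  from choice[OF this] obtain Sel :: "nat \<Rightarrow> nat \<Rightarrow> 'a set" where
    Sel0: "\<forall>m. (\<forall>k. Sel m k \<in> unif_cover X \<Psi> (D (prod_encode (m,k)))) \<and> Y \<subseteq> \<Union>(range (Sel m))"
    by (elim exE)
  have Sel: "\<And>m k. Sel m k \<in> unif_cover X \<Psi> (D (prod_encode (m,k)))" "\<And>m. Y \<subseteq> \<Union>(range (Sel m))"
    using Sel0 by simp_all
  define Sn where "Sn n = Sel (fst (prod_decode n)) (snd (prod_decode n))" for n
  have SnSel: "Sn (prod_encode (m,k)) = Sel m k" for m k unfolding Sn_def by simp
  have Sncov: "Sn n \<in> unif_cover X \<Psi> (D n)" for n
  proof -
    obtain m k where "prod_decode n = (m,k)" by fastforce
    then have "n = prod_encode (m,k)" by (metis prod_decode_inverse)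
    then show ?thesis using Sel(1)[of m k] SnSel by simp
  qed
  have "\<forall>n. \<exists>x. x \<in> X \<and> Sn n = (utop X \<Psi>) interior_of (D n``{x})"
    using Sncov unfolding unif_cover_def by blast
  from choice[OF this] obtain yc where yc0: "\<forall>n. yc n \<in> X \<and> Sn n = (utop X \<Psi>) interior_of (D n``{yc n})"
    by (elim exE)
  have yc: "\<And>n. Sn n \<subseteq> D n``{yc n}"
    using yc0 interior_of_subset by metis
  define ch where "ch p n = (if \<exists>U\<in>F p. Sn n \<subseteq> U then (SOME U. U \<in> F p \<and> Sn n \<subseteq> U) else (SOME U. U \<in> F p))" for p n
  have chF: "ch p n \<in> F p" for p n
  proof (cases "\<exists>U\<in>F p. Sn n \<subseteq> U")
    case True
    then have ex: "\<exists>U. U \<in> F p \<and> Sn n \<subseteq> U" by blast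
    have "ch p n = (SOME U. U \<in> F p \<and> Sn n \<subseteq> U)" unfolding ch_def using True by simp
    then show ?thesis using someI_ex[OF ex] by simp
  next
    case False
    have ex: "\<exists>U. U \<in> F p" using F(3) by blast
    have "ch p n = (SOME U. U \<in> F p)" unfolding ch_def using False by simp
    then show ?thesis using someI_ex[OF ex] by simp
  qed
  have chS: "\<exists>U\<in>F p. Sn n \<subseteq> U \<Longrightarrow> Sn n \<subseteq> ch p n" for p n
  proof -
    assume a: "\<exists>U\<in>F p. Sn n \<subseteq> U"
    then have ex: "\<exists>U. U \<in> F p \<and> Sn n \<subseteq> U" by blast
    have "ch p n = (SOME U. U \<in> F p \<and> Sn n \<subseteq> U)" unfolding ch_def using a by simp
    then show ?thesis using someI_ex[OF ex] by simp
  qed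
  define pl where "pl = rec_nat [] (\<lambda>n p. p @ [ch p n])"
  have pl0: "pl 0 = []" unfolding pl_def by simp
  have plS: "pl (Suc n) = pl n @ [ch (pl n) n]" for n unfolding pl_def by simp
  define T where "T n = ch (pl n) n" for n
  have mapT: "map T [0..<n] = pl n" for n
    by (induction n) (simp_all add: pl0 plS T_def)
  have plpos: "pl n \<in> posn F n" for n
  proof (induction n)
    case 0 then show ?case by (simp add: pl0)
  next
    case (Suc n)
    have "pl n @ [ch (pl n) n] \<in> (\<lambda>U. pl n @ [U]) ` F (pl n)" using chF by simp
    then show ?case unfolding plS posn.simps using Suc by blast
  qed
  have Tplay: "\<forall>n. T n \<in> \<sigma> (map T [0..<n])"
    unfolding mapT T_def using subsetD[OF F(2) chF] by simp
  have "range T \<in> open_covers_of (utop X \<Psi>) Y"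
    unfolding open_covers_of_def
  proof (intro CollectI conjI ballI subsetI)
    fix V assume "V \<in> range T"
    then show "openin (utop X \<Psi>) V" using Tplay \<sigma>open by blast
  next
    fix y assume yY: "y \<in> Y"
    then have "y \<in> X" using Y by blast
    then obtain m where ym: "y \<in> K m" using KX by blast
    obtain k where yk: "y \<in> Sel m k" using Sel(2)[of m] yY by blast
    define n where "n = prod_encode (m,k)"
    have "m \<le> n" unfolding n_def by (rule le_prod_encode_1)
    then have yn: "y \<in> K n" using Kmono ym by blast
    have ySn: "y \<in> Sn n" using yk SnSel n_def by simp
    define p where "p = pl n"
    have lp: "length p = n" unfolding p_def using mapT[of n] by (metis length_map length_upt minus_nat.diff_0)
    obtain U where U: "U \<in> F p" "(converse (Nf p) O Nf p)``{y} \<subseteq> U"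
      using Nf(2)[of p] yn lp by blast
    have "D n \<subseteq> Nf p" using DN plpos p_def by blast
    have "Sn n \<subseteq> U"
    proof
      fix w assume "w \<in> Sn n"
      then have "(yc n, w) \<in> D n" using yc by blast
      moreover have "(yc n, y) \<in> D n" using ySn yc by blast
      ultimately have "(yc n, w) \<in> Nf p" "(yc n, y) \<in> Nf p" using \<open>D n \<subseteq> Nf p\<close> by blast+
      then have "w \<in> (converse (Nf p) O Nf p)``{y}" by blast
      then show "w \<in> U" using U(2) by blast
    qed
    then have "Sn n \<subseteq> T n" unfolding T_def using chS U(1) p_def by blast
    then show "y \<in> \<Union>(range T)" using ySn by blast
  qed
  then show False using \<sigma>win Tplay by blast
qed


theorem theorem2p5:
  fixes X :: "'a set" and \<Psi> :: "('a \<times> 'a) set set" and Y :: "'a set"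
  assumes "is_uniformity X \<Psi>"
    and "sigma_compact (utop X \<Psi>)"
    and "Y \<subseteq> X"
  shows "(S1 (unif_covers X \<Psi>) (open_covers_of (utop X \<Psi>) Y)
            \<longleftrightarrow> S1 (open_covers (utop X \<Psi>)) (open_covers_of (utop X \<Psi>) Y))
       \<and> (S1 (open_covers (utop X \<Psi>)) (open_covers_of (utop X \<Psi>) Y)
            \<longleftrightarrow> \<not> one_has_winning_strategy (open_covers (utop X \<Psi>)) (open_covers_of (utop X \<Psi>) Y))
       \<and> (\<not> one_has_winning_strategy (open_covers (utop X \<Psi>)) (open_covers_of (utop X \<Psi>) Y)
            \<longleftrightarrow> \<not> one_has_winning_strategy (unif_covers X \<Psi>) (open_covers_of (utop X \<Psi>) Y))"
proof -
  let ?B = "open_covers_of (utop X \<Psi>) Y"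
  let ?O = "open_covers (utop X \<Psi>)"
  let ?P = "unif_covers X \<Psi>"
  have sub: "?P \<subseteq> ?O" by (rule unif_covers_sub[OF assms(1)])
  have a: "S1 ?O ?B \<Longrightarrow> S1 ?P ?B" by (rule S1_mono[OF sub])
  have b: "\<not> one_has_winning_strategy ?O ?B \<Longrightarrow> S1 ?O ?B" using noS1_ws by blast
  have c: "\<not> one_has_winning_strategy ?O ?B \<Longrightarrow> \<not> one_has_winning_strategy ?P ?B"
    using ws_mono[OF sub] by blast
  have d: "\<not> one_has_winning_strategy ?P ?B \<Longrightarrow> S1 ?P ?B" using noS1_ws by blast
  have e: "S1 ?P ?B \<Longrightarrow> \<not> one_has_winning_strategy ?O ?B"
    by (rule main_dir[OF assms(1) assms(2) assms(3)])
  show ?thesis using a b c d e by blast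
qed

end
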